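(* Let $b^*>0$, let $f$ be a real function that is three times differentiable on an open interval containing $[0,b^*]$, with $f'''$ Lebesgue integrable on $[0,b^*]$. Let $a,b\in[0,b^*]$ with $a<b$, let $\alpha\in[0,1]$, $m\in(0,1]$, and let $q>1$, $p$ with $\frac1p+\frac1q=1$. If $|f'''|^q$ is $(\alpha,m)$-convex on $[0,b^*]$, then $$\left|\int_a^{mb}f(x)\,dx-\frac{mb-a}{6}\left[f(a)+4f\left(\frac{a+mb}{2}\right)+f(mb)\right]\right|\le \frac{(mb-a)^4}{96}\left(\frac{\Gamma(2p+1)\Gamma(p+1)}{\Gamma(3p+2)}\right)^{1/p}\left\{\left[\frac{|f'''(a)|^q+m\,[2^\alpha(1+\alpha)-1]\,|f'''(b)|^q}{2^\alpha(1+\alpha)}\right]^{1/q}+\left[\frac{(2^{1+\alpha}-1)|f'''(a)|^q+m\,[2^\alpha(1+\alpha)-(2^{1+\alpha}-1)]\,|f'''(b)|^q}{2^\alpha(1+\alpha)}\right]^{1/q}\right\},$$ where $\Gamma$ is the Gamma function.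
   Context: For $(\alpha,m)\in[0,1]^2$ and $b^*>0$, a function $g:[0,b^*]\to\mathbb{R}$ is called $(\alpha,m)$-convex on $[0,b^*]$ if for all $x,y\in[0,b^*]$ and $t\in[0,1]$, $$g(tx+m(1-t)y)\le t^\alpha g(x)+m(1-t^\alpha)g(y).$$ *)

theory Defs
  imports "HOL-Analysis.Analysis"
begin

text \<open>Real power t^a for t \<ge> 0 with the usual convention 0^0 = 1
  (Isabelle's powr has 0 powr 0 = 0).\<close>
definition rpow :: "real \<Rightarrow> real \<Rightarrow> real" where
  "rpow t a = (if t = 0 \<and> a = 0 then 1 else t powr a)"

definition alpha_m_convex_on :: "real \<Rightarrow> real \<Rightarrow> real \<Rightarrow> (real \<Rightarrow> real) \<Rightarrow> bool" where
  "alpha_m_convex_on \<alpha> m bs g \<longleftrightarrow>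
     (\<forall>x\<in>{0..bs}. \<forall>y\<in>{0..bs}. \<forall>t\<in>{0..1}.
        g (t * x + m * (1 - t) * y) \<le> rpow t \<alpha> * g x + m * (1 - rpow t \<alpha>) * g y)"

end

theory Submission
  imports Defs
begin

lemma holder_cont:
  fixes f g :: "real \<Rightarrow> real" and l r p q :: real
  assumes lr: "l \<le> r" and cf: "continuous_on {l..r} f" and cg: "continuous_on {l..r} g"
    and nn: "\<And>x. x \<in> {l..r} \<Longrightarrow> 0 \<le> f x \<and> 0 \<le> g x"
    and p: "p > 1" and q: "q > 1" and pq: "1/p + 1/q = 1"
  shows "integral {l..r} (\<lambda>x. f x * g x)
     \<le> integral {l..r} (\<lambda>x. f x powr p) powr (1/p) * integral {l..r} (\<lambda>x. g x powr q) powr (1/q)"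
proof -
  define A where "A = integral {l..r} (\<lambda>x. f x powr p)"
  define B where "B = integral {l..r} (\<lambda>x. g x powr q)"
  have ifp: "(\<lambda>x. f x powr p) integrable_on {l..r}"
    by (rule integrable_continuous_interval, rule continuous_on_powr') (use cf nn p in auto)
  have igq: "(\<lambda>x. g x powr q) integrable_on {l..r}"
    by (rule integrable_continuous_interval, rule continuous_on_powr') (use cg nn q in auto)
  have ifg: "(\<lambda>x. f x * g x) integrable_on {l..r}"
    by (rule integrable_continuous_interval) (intro continuous_intros cf cg)
  have A0: "A \<ge> 0" unfolding A_def by (rule integral_nonneg[OF ifp]) auto
  have B0: "B \<ge> 0" unfolding B_def by (rule integral_nonneg[OF igq]) auto
  have main: "integral {l..r} (\<lambda>x. f x * g x) \<le> (A + e) powr (1/p) * (B + e) powr (1/q)"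
    if e: "e > 0" for e
  proof -
    define a where "a = (A + e) powr (1/p)"
    define b where "b = (B + e) powr (1/q)"
    have a0: "a > 0" "b > 0" unfolding a_def b_def using A0 B0 e by auto
    have ap: "a powr p = A + e" unfolding a_def using A0 e p by (simp add: powr_powr)
    have bq: "b powr q = B + e" unfolding b_def using B0 e q by (simp add: powr_powr)
    have pw: "f x * g x / (a * b) \<le> f x powr p / (p * (A + e)) + g x powr q / (q * (B + e))"
      if x: "x \<in> {l..r}" for x
    proof -
      have "f x * g x / (a * b) = (f x / a) * (g x / b)" by simp
      also have "\<dots> \<le> (f x / a) powr p / p + (g x / b) powr q / q"
        by (rule Youngs_inequality) (use p q pq nn[OF x] a0 in auto)
      also have "\<dots> = f x powr p / (p * (A + e)) + g x powr q / (q * (B + e))"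
        using nn[OF x] a0 by (simp add: powr_divide ap bq mult.commute)
      finally show ?thesis .
    qed
    have "integral {l..r} (\<lambda>x. f x * g x / (a * b))
       \<le> integral {l..r} (\<lambda>x. f x powr p / (p * (A + e)) + g x powr q / (q * (B + e)))"
      by (rule integral_le) (use pw ifp igq ifg in \<open>auto intro!: integrable_on_divide integrable_add\<close>)
    also have "\<dots> = A / (p * (A + e)) + B / (q * (B + e))"
      by (subst integral_add) (use ifp igq in \<open>auto intro!: integrable_on_divide simp: A_def B_def\<close>)
    also have "\<dots> \<le> 1/p + 1/q"
      using A0 B0 e p q by (intro add_mono divide_left_mono) (auto simp: divide_simps)
    finally have "integral {l..r} (\<lambda>x. f x * g x) / (a * b) \<le> 1" using pq by simp
    then show ?thesis using a0 by (simp add: a_def b_def field_simps)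
  qed
  have lim: "((\<lambda>e. (A + e) powr (1/p) * (B + e) powr (1/q)) \<longlongrightarrow> (A + 0) powr (1/p) * (B + 0) powr (1/q)) (at_right 0)"
    using p q A0 B0
    by (intro tendsto_intros tendsto_powr') (auto simp: eventually_at_right_less intro!: eventually_mono[OF eventually_at_right_less])
  have "integral {l..r} (\<lambda>x. f x * g x) \<le> (A + 0) powr (1/p) * (B + 0) powr (1/q)"
    by (rule tendsto_lowerbound[OF lim]) (auto simp: eventually_at_right_less intro!: main eventually_mono[OF eventually_at_right_less])
  then show ?thesis by (simp add: A_def B_def)
qed

lemma sq_powr: fixes x p :: real assumes "0 \<le> x" "0 < p" shows "(x^2) powr p = x powr (2*p)"
proof (cases "x = 0")
  case False
  then have "x > 0" using assms by simp
  then have "x^2 = x powr 2" by (simp add: powr_realpow)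
  then show ?thesis by (simp add: powr_powr mult.commute)
qed (use assms in simp)

lemma beta_half1:
  fixes p :: real assumes p: "p > 0"
  shows "((\<lambda>s. (s^2*(1/2 - s)/6) powr p) has_integral (Beta (2*p+1) (p+1) / 2 / 48 powr p)) {0..1/2}"
proof -
  have "((\<lambda>t. t powr (2*p+1 - 1) * (1 - t) powr (p+1 - 1)) has_integral Beta (2*p+1) (p+1)) {0..1}"
    by (rule has_integral_Beta_real) (use p in auto)
  from has_integral_stretch_real[OF this, of 2]
  have "((\<lambda>x. (2*x) powr (2*p) * (1 - 2*x) powr p) has_integral (Beta (2*p+1) (p+1) / 2)) ((\<lambda>x. x/2) ` {0..1})"
    by simp
  moreover have "(\<lambda>x::real. x/2) ` {0..1} = {0..1/2}"
    using image_affinity_atLeastAtMost[of "1/2" 0 0 "1::real"] by simp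
  ultimately have h: "((\<lambda>x. (2*x) powr (2*p) * (1 - 2*x) powr p) has_integral (Beta (2*p+1) (p+1) / 2)) {0..1/2}"
    by simp
  have "((\<lambda>x. (2*x) powr (2*p) * (1 - 2*x) powr p / 48 powr p) has_integral (Beta (2*p+1) (p+1) / 2 / 48 powr p)) {0..1/2}"
    by (rule has_integral_divide[OF h])
  then show ?thesis
  proof (rule has_integral_eq[rotated])
    fix s :: real assume s: "s \<in> {0..1/2}"
    have e: "s^2*(1/2 - s)/6 = ((2 * s)^2 * (1 - 2 * s)) / 48" by (simp add: field_simps power2_eq_square)
    have "(s^2*(1/2 - s)/6) powr p = (((2 * s)^2 * (1 - 2 * s)) / 48) powr p" by (simp only: e)
    also have "\<dots> = ((2 * s)^2 * (1 - 2 * s)) powr p / 48 powr p"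
      using s by (intro powr_divide)
    also have "\<dots> = (2 * s) powr (2*p) * (1 - 2 * s) powr p / 48 powr p"
    proof -
      have "((2 * s)^2) powr p = (2 * s) powr (2*p)" by (rule sq_powr) (use s p in auto)
      then show ?thesis by (simp only: powr_mult)
    qed
    finally show "(2 * s) powr (2*p) * (1 - 2 * s) powr p / 48 powr p = (s^2*(1/2 - s)/6) powr p" by simp
  qed
qed

lemma beta_half2:
  fixes p :: real assumes p: "p > 0"
  shows "((\<lambda>s. ((1-s)^2*(s - 1/2)/6) powr p) has_integral (Beta (2*p+1) (p+1) / 2 / 48 powr p)) {1/2..1}"
proof -
  define \<phi> where "\<phi> = (\<lambda>s::real. (s^2*(1/2 - s)/6) powr p)"
  define I where "I = Beta (2*p+1) (p+1) / 2 / 48 powr p"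
  have h: "(\<phi> has_integral I) (cbox 0 (1/2))"
    using beta_half1[OF p] unfolding \<phi>_def I_def by simp
  from has_integral_affinity[OF h, of "-1" 1]
  have "((\<lambda>x. \<phi> ((-1) * x + 1)) has_integral I) ((\<lambda>x. (-1) * x + 1) ` {0..1/2})"
    by simp
  moreover have "((\<lambda>x. (-1) * x + 1) ` {0..1/2::real}) = {1/2..1}"
    using image_affinity_atLeastAtMost[of "-1" 1 0 "1/2::real"] by simp
  ultimately have "((\<lambda>x. \<phi> ((-1) * x + 1)) has_integral I) {1/2..1}" by simp
  then show ?thesis unfolding \<phi>_def I_def
    by (rule has_integral_eq[rotated]) (simp add: algebra_simps)
qed

lemma rpow_pos_eq: "s > 0 \<Longrightarrow> rpow s a = s powr a"
  by (simp add: rpow_def)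

lemma rpow_alt: "s \<ge> 0 \<Longrightarrow> rpow s a = (if a = 0 then 1 else s powr a)"
  by (auto simp: rpow_def)

lemma rpow_bounds: "0 \<le> a \<Longrightarrow> s \<in> {0..1} \<Longrightarrow> 0 \<le> rpow s a \<and> rpow s a \<le> 1"
  by (auto simp: rpow_def powr_le1)

lemma rpow_cont: assumes a0: "0 \<le> a" shows "continuous_on {0..1} (\<lambda>s. rpow s a)"
proof (cases "a = 0")
  case True
  have "continuous_on {0..1} (\<lambda>s::real. 1::real)" by simp
  then show ?thesis by (rule continuous_on_cong[THEN iffD1, rotated 2]) (use True in \<open>auto simp: rpow_def\<close>)
next
  case False
  have "continuous_on {0..1} (\<lambda>s::real. s powr a)"
    using a0 False by (intro continuous_on_powr' continuous_on_id continuous_on_const) auto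
  then show ?thesis by (rule continuous_on_cong[THEN iffD1, rotated 2]) (use False in \<open>auto simp: rpow_def\<close>)
qed

lemma rpow_integral:
  assumes a: "0 \<le> a" and lr: "0 \<le> l" "l \<le> r"
  shows "((\<lambda>s. rpow s a) has_integral (r powr (a+1) / (a+1) - l powr (a+1) / (a+1))) {l..r}"
proof (rule fundamental_theorem_of_calculus_interior[OF lr(2)])
  show "continuous_on {l..r} (\<lambda>s. s powr (a+1) / (a+1))"
    using a lr by (intro continuous_on_divide continuous_on_powr' continuous_on_id continuous_on_const) auto
  fix x assume x: "x \<in> {l<..<r}"
  then have x0: "x > 0" using lr by auto
  have "((\<lambda>s. s powr (a+1) / (a+1)) has_real_derivative ((a+1) * x powr (a+1-1) / (a+1))) (at x)"
    using x0 by (auto intro!: derivative_eq_intros)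
  moreover have "(a+1) * x powr (a+1-1) / (a+1) = rpow x a" using x0 a by (simp add: rpow_pos_eq)
  ultimately show "((\<lambda>s. s powr (a+1) / (a+1)) has_vector_derivative rpow x a) (at x)"
    by (simp add: has_real_derivative_iff_has_vector_derivative)
qed

theorem theorem4:
  fixes f f1 f2 f3 :: "real \<Rightarrow> real" and bs a b \<alpha> m p q c d :: real
  assumes bs_pos: "bs > 0"
    and cd: "c < 0" "bs < d"
    and d1: "\<And>x. x \<in> {c<..<d} \<Longrightarrow> (f has_real_derivative f1 x) (at x)"
    and d2: "\<And>x. x \<in> {c<..<d} \<Longrightarrow> (f1 has_real_derivative f2 x) (at x)"
    and d3: "\<And>x. x \<in> {c<..<d} \<Longrightarrow> (f2 has_real_derivative f3 x) (at x)"
    and int3: "set_integrable lborel {0..bs} f3"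
    and ab: "a \<in> {0..bs}" "b \<in> {0..bs}" "a < b"
    and alpha: "\<alpha> \<in> {0..1}"
    and mm: "m \<in> {0<..1}"
    and q: "q > 1" and pq: "1 / p + 1 / q = 1"
    and conv: "alpha_m_convex_on \<alpha> m bs (\<lambda>x. \<bar>f3 x\<bar> powr q)"
  shows "\<bar>(LBINT x=ereal a..ereal (m * b). f x)
            - (m * b - a) / 6 * (f a + 4 * f ((a + m * b) / 2) + f (m * b))\<bar>
         \<le> (m * b - a) ^ 4 / 96
            * (Gamma (2 * p + 1) * Gamma (p + 1) / Gamma (3 * p + 2)) powr (1 / p)
            * ((( \<bar>f3 a\<bar> powr q + m * (2 powr \<alpha> * (1 + \<alpha>) - 1) * \<bar>f3 b\<bar> powr q)
                  / (2 powr \<alpha> * (1 + \<alpha>))) powr (1 / q)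
             + (((2 powr (1 + \<alpha>) - 1) * \<bar>f3 a\<bar> powr q
                  + m * (2 powr \<alpha> * (1 + \<alpha>) - (2 powr (1 + \<alpha>) - 1)) * \<bar>f3 b\<bar> powr q)
                  / (2 powr \<alpha> * (1 + \<alpha>))) powr (1 / q))"
proof -
  have a0: "0 \<le> a" and bbs: "b \<le> bs" and m0: "0 < m" and m1: "m \<le> 1"
    using ab mm by auto
  have al0: "0 \<le> \<alpha>" "\<alpha> \<le> 1" using alpha by auto
  define v where "v = m * b"
  define h where "h = a - v"
  have v0: "0 < v" unfolding v_def using m0 a0 ab by auto
  have "m * b \<le> 1 * b" using m1 a0 ab by (intro mult_right_mono) auto
  then have vbs: "v \<le> bs" unfolding v_def using bbs by simp
  have ptbs: "v + s * h \<in> {0..bs}" if s: "s \<in> {0..1}" for s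
  proof -
    have e: "v + s * h = s * a + (1 - s) * v" unfolding h_def by (simp add: algebra_simps)
    have "0 \<le> s * a + (1 - s) * v" using s a0 v0 by auto
    moreover have "s * a + (1 - s) * v \<le> s * bs + (1 - s) * bs"
      using s ab vbs by (intro add_mono mult_left_mono) auto
    ultimately show ?thesis unfolding e by (auto simp: algebra_simps)
  qed
  have ptcd: "v + s * h \<in> {c<..<d}" if s: "s \<in> {0..1}" for s
    using ptbs[OF s] cd by auto
  define G where "G = (\<lambda>s. f (v + s * h))"
  define G1 where "G1 = (\<lambda>s. h * f1 (v + s * h))"
  define G2 where "G2 = (\<lambda>s. h^2 * f2 (v + s * h))"
  define G3 where "G3 = (\<lambda>s. h^3 * f3 (v + s * h))"
  have dlin: "((\<lambda>s. v + s * h) has_real_derivative h) (at s)" for s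
    by (auto intro!: derivative_eq_intros)
  have dG: "(G has_real_derivative G1 s) (at s)" if s: "s \<in> {0..1}" for s
  proof -
    have "((\<lambda>s. f (v + s * h)) has_real_derivative f1 (v + s * h) * h) (at s)"
      by (rule DERIV_chain2[OF d1[OF ptcd[OF s]] dlin])
    then show ?thesis unfolding G_def G1_def by (simp add: mult.commute)
  qed
  have dG1: "(G1 has_real_derivative G2 s) (at s)" if s: "s \<in> {0..1}" for s
  proof -
    have "((\<lambda>s. f1 (v + s * h)) has_real_derivative f2 (v + s * h) * h) (at s)"
      by (rule DERIV_chain2[OF d2[OF ptcd[OF s]] dlin])
    from DERIV_cmult[OF this, of h] have "(G1 has_real_derivative h * (f2 (v + s*h) * h)) (at s)"
      unfolding G1_def .
    moreover have "h * (f2 (v + s*h) * h) = G2 s" unfolding G2_def by (simp add: power2_eq_square)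
    ultimately show ?thesis by simp
  qed
  have dG2: "(G2 has_real_derivative G3 s) (at s)" if s: "s \<in> {0..1}" for s
  proof -
    have "((\<lambda>s. f2 (v + s * h)) has_real_derivative f3 (v + s * h) * h) (at s)"
      by (rule DERIV_chain2[OF d3[OF ptcd[OF s]] dlin])
    from DERIV_cmult[OF this, of "h^2"] have "(G2 has_real_derivative h^2 * (f3 (v + s*h) * h)) (at s)"
      unfolding G2_def .
    moreover have "h^2 * (f3 (v + s*h) * h) = G3 s" unfolding G3_def by (simp add: power3_eq_cube power2_eq_square)
    ultimately show ?thesis by simp
  qed
  have contG: "continuous_on {0..1} G"
    using dG by (intro continuous_at_imp_continuous_on ballI DERIV_isCont) auto
  define H1 where "H1 = (\<lambda>s. (s^2/12 - s^3/6) * G2 s - (s/6 - s^2/2) * G1 s + (1/6 - s) * G s)"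
  define H2 where "H2 = (\<lambda>s. ((1-s)^3/6 - (1-s)^2/12) * G2 s - ((1-s)/6 - (1-s)^2/2) * G1 s + ((1-s) - 1/6) * G s)"
  have dH1: "(H1 has_real_derivative ((s^2/12 - s^3/6) * G3 s - G s)) (at s)" if s: "s \<in> {0..1}" for s
    unfolding H1_def
    by (auto intro!: derivative_eq_intros dG[OF s] dG1[OF s] dG2[OF s]; simp add: field_simps power2_eq_square power3_eq_cube)
  have dH2: "(H2 has_real_derivative (((1-s)^3/6 - (1-s)^2/12) * G3 s - G s)) (at s)" if s: "s \<in> {0..1}" for s
    unfolding H2_def
    by (auto intro!: derivative_eq_intros dG[OF s] dG1[OF s] dG2[OF s]; simp add: field_simps power2_eq_square power3_eq_cube)
  have hH1: "((\<lambda>s. (s^2/12 - s^3/6) * G3 s - G s) has_integral (H1 (1/2) - H1 0)) {0..1/2}"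
    by (rule fundamental_theorem_of_calculus)
       (auto simp: has_real_derivative_iff_has_vector_derivative[symmetric] intro!: has_field_derivative_at_within dH1)
  have hH2: "((\<lambda>s. ((1-s)^3/6 - (1-s)^2/12) * G3 s - G s) has_integral (H2 1 - H2 (1/2))) {1/2..1}"
    by (rule fundamental_theorem_of_calculus)
       (auto simp: has_real_derivative_iff_has_vector_derivative[symmetric] intro!: has_field_derivative_at_within dH2)
  define I1 where "I1 = integral {0..1/2} G"
  define I2 where "I2 = integral {1/2..1} G"
  have iG1: "(G has_integral I1) {0..1/2}" unfolding I1_def
    by (rule integrable_integral, rule integrable_continuous_interval, rule continuous_on_subset[OF contG]) auto
  have iG2: "(G has_integral I2) {1/2..1}" unfolding I2_def
    by (rule integrable_integral, rule integrable_continuous_interval, rule continuous_on_subset[OF contG]) auto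
  have IG: "integral {0..1} G = I1 + I2" unfolding I1_def I2_def
    using Henstock_Kurzweil_Integration.integral_combine[where a=0 and c="1/2" and b=1 and f=G] integrable_continuous_interval[OF contG] by simp
  define E1 where "E1 = H1 (1/2) - H1 0 + I1"
  define E2 where "E2 = H2 1 - H2 (1/2) + I2"
  have hE1: "((\<lambda>s. (s^2/12 - s^3/6) * G3 s) has_integral E1) {0..1/2}"
    unfolding E1_def using has_integral_add[OF hH1 iG1] by simp
  have hE2: "((\<lambda>s. ((1-s)^3/6 - (1-s)^2/12) * G3 s) has_integral E2) {1/2..1}"
    unfolding E2_def using has_integral_add[OF hH2 iG2] by simp
  have ident: "integral {0..1} G - (G 0 + 4 * G (1/2) + G 1) / 6 = E1 + E2"
    unfolding IG E1_def E2_def H1_def H2_def by (simp add: algebra_simps power2_eq_square power3_eq_cube)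
  have q0: "q > 0" using q by simp
  have ip: "1/p = 1 - 1/q" using pq by simp
  have "1/q < 1" "0 < 1/q" using q by auto
  then have ip0: "0 < 1/p" "1/p < 1" using ip by auto
  then have p0: "p > 0" by (simp add: zero_less_divide_1_iff)
  have p1: "p > 1" using ip0 p0 by (simp add: divide_less_eq)
  have contf: "continuous_on {c<..<d} f"
    using d1 by (intro continuous_at_imp_continuous_on ballI DERIV_isCont) auto
  have subst: "(LBINT s=ereal 0..ereal 1. h *\<^sub>R f (v + s * h)) = (LBINT y=ereal (v + 0 * h)..ereal (v + 1 * h). f y)"
  proof (rule interval_integral_substitution_finite[where g="\<lambda>s. v + s * h" and g'="\<lambda>s. h"])
    show "((\<lambda>s. v + s * h) has_real_derivative h) (at x within {0..1})" for x
      by (rule has_field_derivative_at_within[OF dlin])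
    show "continuous_on ((\<lambda>s. v + s * h) ` {0..1}) f"
      by (rule continuous_on_subset[OF contf]) (use ptcd in auto)
  qed auto
  have "(LBINT s=ereal 0..ereal 1. h *\<^sub>R f (v + s * h)) = integral {0..1} (\<lambda>s. h *\<^sub>R f (v + s * h))"
    by (rule interval_integral_eq_integral) (auto intro!: borel_integrable_atLeastAtMost' continuous_intros contG[unfolded G_def])
  also have "\<dots> = h * integral {0..1} G" by (simp add: G_def)
  finally have sub2: "(LBINT s=ereal 0..ereal 1. h *\<^sub>R f (v + s * h)) = h * integral {0..1} G" .
  with subst sub2 have "(LBINT y=v..a. f y) = h * integral {0..1} G"
    by (simp add: h_def)
  then have L1: "(LBINT x=ereal a..ereal (m * b). f x) = - (h * integral {0..1} G)"
    using interval_integral_endpoints_reverse[of a v f] by (simp add: v_def)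
  have Ga: "f a = G 1" and Gm: "f ((a + m * b) / 2) = G (1/2)" and Gb: "f (m * b) = G 0"
    unfolding G_def h_def v_def by (simp_all add: field_simps)
  have LHS: "\<bar>(LBINT x=ereal a..ereal (m * b). f x)
            - (m * b - a) / 6 * (f a + 4 * f ((a + m * b) / 2) + f (m * b))\<bar> = \<bar>h\<bar> * \<bar>E1 + E2\<bar>"
  proof -
    have "(LBINT x=ereal a..ereal (m * b). f x)
            - (m * b - a) / 6 * (f a + 4 * f ((a + m * b) / 2) + f (m * b))
          = - h * (integral {0..1} G - (G 0 + 4 * G (1/2) + G 1) / 6)"
      unfolding L1 Ga Gm Gb by (simp add: h_def v_def field_simps)
    then show ?thesis unfolding ident by (simp add: abs_mult)
  qed
  define Aq where "Aq = \<bar>f3 a\<bar> powr q"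
  define Bq where "Bq = \<bar>f3 b\<bar> powr q"
  define \<psi> where "\<psi> = (\<lambda>s. rpow s \<alpha> * Aq + m * (1 - rpow s \<alpha>) * Bq)"
  have Aq0: "0 \<le> Aq" and Bq0: "0 \<le> Bq" unfolding Aq_def Bq_def by auto
  have psi_nn: "0 \<le> \<psi> s" if s: "s \<in> {0..1}" for s
    using rpow_bounds[OF al0(1) s] Aq0 Bq0 m0 unfolding \<psi>_def by (auto intro!: add_nonneg_nonneg mult_nonneg_nonneg)
  have psi_cont: "continuous_on {0..1} \<psi>"
    unfolding \<psi>_def by (intro continuous_intros rpow_cont al0(1))
  have g_cont: "continuous_on {0..1} (\<lambda>s. \<psi> s powr (1/q))"
    by (rule continuous_on_powr'[OF psi_cont continuous_on_const]) (use psi_nn q0 in auto)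
  have f3bd: "\<bar>f3 (v + s * h)\<bar> \<le> \<psi> s powr (1/q)" if s: "s \<in> {0..1}" for s
  proof -
    have "(\<lambda>x. \<bar>f3 x\<bar> powr q) (s * a + m * (1 - s) * b) \<le> rpow s \<alpha> * (\<lambda>x. \<bar>f3 x\<bar> powr q) a + m * (1 - rpow s \<alpha>) * (\<lambda>x. \<bar>f3 x\<bar> powr q) b"
      using conv ab s unfolding alpha_m_convex_on_def by blast
    moreover have "s * a + m * (1 - s) * b = v + s * h" unfolding v_def h_def by (simp add: algebra_simps)
    ultimately have "\<bar>f3 (v + s * h)\<bar> powr q \<le> \<psi> s" unfolding \<psi>_def Aq_def Bq_def by simp
    then have "(\<bar>f3 (v + s * h)\<bar> powr q) powr (1/q) \<le> \<psi> s powr (1/q)"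
      by (rule powr_mono2[rotated 2]) (use q0 in auto)
    then show ?thesis using q0 by (simp add: powr_powr)
  qed
  define w1 where "w1 = (\<lambda>s::real. s^2*(1/2 - s)/6)"
  define w2 where "w2 = (\<lambda>s::real. (1-s)^2*(s - 1/2)/6)"
  define J1 where "J1 = integral {0..1/2} (\<lambda>s. w1 s * \<psi> s powr (1/q))"
  define J2 where "J2 = integral {1/2..1} (\<lambda>s. w2 s * \<psi> s powr (1/q))"
  have bE1: "\<bar>E1\<bar> \<le> \<bar>h\<bar>^3 * J1"
  proof -
    have "norm (integral {0..1/2} (\<lambda>s. (s^2/12 - s^3/6) * G3 s)) \<le> integral {0..1/2} (\<lambda>s. \<bar>h\<bar>^3 * (w1 s * \<psi> s powr (1/q)))"
    proof (rule integral_norm_bound_integral)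
      show "(\<lambda>s. (s^2/12 - s^3/6) * G3 s) integrable_on {0..1/2}" using hE1 by blast
      show "(\<lambda>s. \<bar>h\<bar>^3 * (w1 s * \<psi> s powr (1/q))) integrable_on {0..1/2}"
        by (rule integrable_continuous_interval) (unfold w1_def, intro continuous_intros continuous_on_subset[OF g_cont], auto)
      fix s :: real assume s: "s \<in> {0..1/2}"
      then have s1: "s \<in> {0..1}" by auto
      have w1n: "0 \<le> w1 s" unfolding w1_def using s by (auto intro!: mult_nonneg_nonneg)
      have "s^2/12 - s^3/6 = w1 s" unfolding w1_def by (simp add: power2_eq_square power3_eq_cube field_simps)
      then have w: "s^2/12 - s^3/6 = w1 s" "0 \<le> w1 s" using w1n by auto
      have "norm ((s^2/12 - s^3/6) * G3 s) = \<bar>h\<bar>^3 * (w1 s * \<bar>f3 (v + s * h)\<bar>)"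
        unfolding w G3_def using w(2) by (simp add: abs_mult power_abs)
      also have "\<dots> \<le> \<bar>h\<bar>^3 * (w1 s * \<psi> s powr (1/q))"
        using f3bd[OF s1] w(2) by (intro mult_left_mono) auto
      finally show "norm ((s^2/12 - s^3/6) * G3 s) \<le> \<bar>h\<bar>^3 * (w1 s * \<psi> s powr (1/q))" .
    qed
    then show ?thesis using integral_unique[OF hE1] unfolding J1_def by simp
  qed
  have bE2: "\<bar>E2\<bar> \<le> \<bar>h\<bar>^3 * J2"
  proof -
    have "norm (integral {1/2..1} (\<lambda>s. ((1-s)^3/6 - (1-s)^2/12) * G3 s)) \<le> integral {1/2..1} (\<lambda>s. \<bar>h\<bar>^3 * (w2 s * \<psi> s powr (1/q)))"
    proof (rule integral_norm_bound_integral)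
      show "(\<lambda>s. ((1-s)^3/6 - (1-s)^2/12) * G3 s) integrable_on {1/2..1}" using hE2 by blast
      show "(\<lambda>s. \<bar>h\<bar>^3 * (w2 s * \<psi> s powr (1/q))) integrable_on {1/2..1}"
        by (rule integrable_continuous_interval) (unfold w2_def, intro continuous_intros continuous_on_subset[OF g_cont], auto)
      fix s :: real assume s: "s \<in> {1/2..1}"
      then have s1: "s \<in> {0..1}" by auto
      have w2n: "0 \<le> w2 s" unfolding w2_def using s by (auto intro!: mult_nonneg_nonneg)
      have "(1-s)^3/6 - (1-s)^2/12 = - w2 s" unfolding w2_def by (simp add: power2_eq_square power3_eq_cube field_simps)
      then have w: "\<bar>(1-s)^3/6 - (1-s)^2/12\<bar> = w2 s" "0 \<le> w2 s" using w2n by auto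
      have "norm (((1-s)^3/6 - (1-s)^2/12) * G3 s) = \<bar>h\<bar>^3 * (w2 s * \<bar>f3 (v + s * h)\<bar>)"
        unfolding G3_def using w by (simp add: abs_mult power_abs)
      also have "\<dots> \<le> \<bar>h\<bar>^3 * (w2 s * \<psi> s powr (1/q))"
        using f3bd[OF s1] w(2) by (intro mult_left_mono) auto
      finally show "norm (((1-s)^3/6 - (1-s)^2/12) * G3 s) \<le> \<bar>h\<bar>^3 * (w2 s * \<psi> s powr (1/q))" .
    qed
    then show ?thesis using integral_unique[OF hE2] unfolding J2_def by simp
  qed
  define Bt where "Bt = Beta (2*p+1) (p+1)"
  define W where "W = Bt / 2 / 48 powr p"
  define Psi1 where "Psi1 = integral {0..1/2} \<psi>"
  define Psi2 where "Psi2 = integral {1/2..1} \<psi>"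
  have pq_pow: "\<And>s. s \<in> {0..1} \<Longrightarrow> (\<psi> s powr (1/q)) powr q = \<psi> s"
    using psi_nn q0 by (simp add: powr_powr)
  have hJ1: "J1 \<le> W powr (1/p) * Psi1 powr (1/q)"
  proof -
    have "J1 \<le> integral {0..1/2} (\<lambda>s. w1 s powr p) powr (1/p) * integral {0..1/2} (\<lambda>s. (\<psi> s powr (1/q)) powr q) powr (1/q)"
      unfolding J1_def
    proof (rule holder_cont[OF _ _ _ _ p1 q pq])
      show "continuous_on {0..1/2} w1" unfolding w1_def by (intro continuous_intros) auto
      show "continuous_on {0..1/2} (\<lambda>s. \<psi> s powr (1/q))" by (rule continuous_on_subset[OF g_cont]) auto
      fix x :: real assume x: "x \<in> {0..1/2}"
      then show "0 \<le> w1 x \<and> 0 \<le> \<psi> x powr (1/q)" unfolding w1_def by (auto intro!: mult_nonneg_nonneg)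
    qed simp
    also have "integral {0..1/2} (\<lambda>s. w1 s powr p) = W"
      unfolding W_def Bt_def w1_def by (rule integral_unique[OF beta_half1[OF p0]])
    also have "integral {0..1/2} (\<lambda>s. (\<psi> s powr (1/q)) powr q) = Psi1"
      unfolding Psi1_def by (rule integral_cong) (use pq_pow in auto)
    finally show ?thesis .
  qed
  have hJ2: "J2 \<le> W powr (1/p) * Psi2 powr (1/q)"
  proof -
    have "J2 \<le> integral {1/2..1} (\<lambda>s. w2 s powr p) powr (1/p) * integral {1/2..1} (\<lambda>s. (\<psi> s powr (1/q)) powr q) powr (1/q)"
      unfolding J2_def
    proof (rule holder_cont[OF _ _ _ _ p1 q pq])
      show "continuous_on {1/2..1} w2" unfolding w2_def by (intro continuous_intros) auto
      show "continuous_on {1/2..1} (\<lambda>s. \<psi> s powr (1/q))" by (rule continuous_on_subset[OF g_cont]) auto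
      fix x :: real assume x: "x \<in> {1/2..1}"
      then show "0 \<le> w2 x \<and> 0 \<le> \<psi> x powr (1/q)" unfolding w2_def by (auto intro!: mult_nonneg_nonneg)
    qed simp
    also have "integral {1/2..1} (\<lambda>s. w2 s powr p) = W"
      unfolding W_def Bt_def w2_def by (rule integral_unique[OF beta_half2[OF p0]])
    also have "integral {1/2..1} (\<lambda>s. (\<psi> s powr (1/q)) powr q) = Psi2"
      unfolding Psi2_def by (rule integral_cong) (use pq_pow in auto)
    finally show ?thesis .
  qed
  have hpsi: "(\<psi> has_integral (m * Bq * (r - l) + (Aq - m * Bq) * (r powr (\<alpha>+1) / (\<alpha>+1) - l powr (\<alpha>+1) / (\<alpha>+1)))) {l..r}"
    if lr: "0 \<le> l" "l \<le> r" for l r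
  proof -
    have c: "((\<lambda>s. m * Bq) has_integral (m * Bq * (r - l))) {l..r}"
      using has_integral_const_real[of "m * Bq" l r] lr by (simp add: mult.commute)
    have "((\<lambda>s. m * Bq + (Aq - m * Bq) * rpow s \<alpha>) has_integral
           (m * Bq * (r - l) + (Aq - m * Bq) * (r powr (\<alpha>+1) / (\<alpha>+1) - l powr (\<alpha>+1) / (\<alpha>+1)))) {l..r}"
      by (intro has_integral_add c has_integral_mult_right rpow_integral al0(1) lr)
    then show ?thesis unfolding \<psi>_def by (rule has_integral_eq[rotated]) (auto simp: algebra_simps)
  qed
  define P where "P = (2::real) powr \<alpha>"
  have P0: "P > 0" unfolding P_def by simp
  have hP: "(1/2::real) powr (\<alpha>+1) = 1 / (2 * P)" unfolding P_def by (simp add: powr_divide powr_add)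
  have hP2: "(2::real) powr (1+\<alpha>) = 2 * P" unfolding P_def by (simp add: powr_add)
  define T1 where "T1 = (Aq + m * (P * (1 + \<alpha>) - 1) * Bq) / (P * (1 + \<alpha>))"
  define T2 where "T2 = ((2 * P - 1) * Aq + m * (P * (1 + \<alpha>) - (2 * P - 1)) * Bq) / (P * (1 + \<alpha>))"
  have a1: "\<alpha> + 1 \<noteq> 0" "1 + \<alpha> \<noteq> 0" using al0 by auto
  define D where "D = P * (1 + \<alpha>)"
  have D0: "D > 0" unfolding D_def using P0 al0 by auto
  have Dq1: "1 / (2 * P) / (\<alpha> + 1) = 1 / (2 * D)" using P0 a1 D0 unfolding D_def by (simp add: field_simps)
  have Dq2: "1 / (\<alpha> + 1) = P / D" using P0 a1 D0 unfolding D_def by (simp add: field_simps)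
  have hPsi1: "Psi1 = T1 / 2"
  proof -
    have "Psi1 = m * Bq * (1/2 - 0) + (Aq - m * Bq) * ((1/2) powr (\<alpha>+1) / (\<alpha>+1) - 0 powr (\<alpha>+1) / (\<alpha>+1))"
      unfolding Psi1_def by (rule integral_unique[OF hpsi]) auto
    also have "\<dots> = m * Bq / 2 + (Aq - m * Bq) * (1 / (2 * D))" unfolding hP Dq1 by simp
    also have "\<dots> = T1 / 2" unfolding T1_def D_def[symmetric] using D0 by (simp add: field_simps)
    finally show ?thesis .
  qed
  have hPsi2: "Psi2 = T2 / 2"
  proof -
    have "Psi2 = m * Bq * (1 - 1/2) + (Aq - m * Bq) * (1 powr (\<alpha>+1) / (\<alpha>+1) - (1/2) powr (\<alpha>+1) / (\<alpha>+1))"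
      unfolding Psi2_def by (rule integral_unique[OF hpsi]) auto
    also have "\<dots> = m * Bq / 2 + (Aq - m * Bq) * (P / D - 1 / (2 * D))" unfolding hP Dq1 Dq2[symmetric] by simp
    also have "\<dots> = T2 / 2" unfolding T2_def D_def[symmetric] using D0 by (simp add: field_simps)
    finally show ?thesis .
  qed
  define x where "x = (2::real) powr (1/p)"
  define y where "y = (2::real) powr (1/q)"
  have xy: "x * y = 2" unfolding x_def y_def by (simp add: powr_add[symmetric] pq)
  have x0: "x > 0" "y > 0" unfolding x_def y_def by auto
  have Wp: "W powr (1/p) = Bt powr (1/p) / x / 48"
    unfolding W_def x_def using p0 by (simp add: powr_divide powr_powr powr_mult)
  have key: "W powr (1/p) * (T / 2) powr (1/q) = Bt powr (1/p) * T powr (1/q) / 96" for T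
  proof -
    have "W powr (1/p) * (T / 2) powr (1/q) = Bt powr (1/p) / x / 48 * (T powr (1/q) / y)"
      unfolding Wp y_def by (simp add: powr_divide)
    also have "\<dots> = Bt powr (1/p) * T powr (1/q) / (48 * (x * y))" using x0 by (simp add: field_simps)
    finally show ?thesis unfolding xy by simp
  qed
  have Gam: "Gamma (2 * p + 1) * Gamma (p + 1) / Gamma (3 * p + 2) = Bt"
  proof -
    have "2 * p + 1 + (p + 1) = 3 * p + 2" by simp
    then show ?thesis unfolding Bt_def Beta_def by simp
  qed
  have "(m * b - a) ^ 4 = (a - m * b) ^ 4" by algebra
  then have h4: "(m * b - a) ^ 4 = \<bar>h\<bar> ^ 4" unfolding h_def v_def by (simp add: power_even_abs_numeral)
  have hh: "\<bar>h\<bar> * \<bar>h\<bar>^3 = \<bar>h\<bar>^4" by (simp add: power4_eq_xxxx power3_eq_cube)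
  have J1n: "0 \<le> J1" unfolding J1_def
    by (rule integral_nonneg, rule integrable_continuous_interval)
       (unfold w1_def, (intro continuous_intros continuous_on_subset[OF g_cont]; auto), auto intro!: mult_nonneg_nonneg)
  have "\<bar>h\<bar> * \<bar>E1 + E2\<bar> \<le> \<bar>h\<bar> * (\<bar>h\<bar>^3 * (W powr (1/p) * Psi1 powr (1/q)) + \<bar>h\<bar>^3 * (W powr (1/p) * Psi2 powr (1/q)))"
  proof (rule mult_left_mono)
    have "\<bar>E1 + E2\<bar> \<le> \<bar>E1\<bar> + \<bar>E2\<bar>" by (rule abs_triangle_ineq)
    also have "\<dots> \<le> \<bar>h\<bar>^3 * J1 + \<bar>h\<bar>^3 * J2" using bE1 bE2 by simp
    also have "\<dots> \<le> \<bar>h\<bar>^3 * (W powr (1/p) * Psi1 powr (1/q)) + \<bar>h\<bar>^3 * (W powr (1/p) * Psi2 powr (1/q))"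
      using hJ1 hJ2 by (intro add_mono mult_left_mono) auto
    finally show "\<bar>E1 + E2\<bar> \<le> \<dots>" .
  qed simp
  also have "\<dots> = \<bar>h\<bar> * \<bar>h\<bar>^3 / 96 * Bt powr (1/p) * (T1 powr (1/q) + T2 powr (1/q))"
    unfolding hPsi1 hPsi2 key by (simp add: algebra_simps)
  finally show ?thesis
    unfolding LHS Gam h4 hh[symmetric] T1_def T2_def P_def hP2[unfolded P_def, symmetric] Aq_def Bq_def by simp
qed

end
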